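(* Let $f(t)\in\mathbb{Q}[t]$ be irreducible of degree $3$. Then there are infinitely many quadratic polynomials $g(y)\in\mathbb{Q}[y]$ for which $f(g(y))$ is reducible in $\mathbb{Q}[y]$, and which are pairwise distinct under transformations replacing $y$ by a polynomial in $y$ (that is, no one of them is obtained from another by substituting a polynomial $p(y)\in\mathbb{Q}[y]$ for $y$). *)

theory Defs
  imports "HOL-Computational_Algebra.Polynomial_Factorial"
begin

end

theory Submission
  imports Defs "HOL-Computational_Algebra.Field_as_Ring"
begin

lemma taylor3:
  fixes C0 C1 C2 C3 K Q :: "'a::idom"
  shows "C0 + C1*(K+Q) + C2*(K+Q)^2 + C3*(K+Q)^3 = (C0 + C1*K + C2*K^2 + C3*K^3) + (C1 + 2*C2*K + 3*C3*K^2)*Q + (C2 + 3*C3*K)*Q^2 + C3*Q^3"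
  by algebra

lemma key3:
  fixes C3 Y Q D0 D1 D2 X :: "'a::idom"
  assumes "C3*Y*Q = X"
  shows "C3^3*Y^3*(D0 + D1*Q + D2*Q^2 + C3*Q^3) = C3*(C3^2*D0*Y^3 + C3*D1*Y^2*X + D2*Y*X^2 + X^3)"
proof -
  have "C3^3*Y^3*(D0 + D1*Q + D2*Q^2 + C3*Q^3) = C3*(C3^2*D0*Y^3 + C3*D1*Y^2*(C3*Y*Q) + D2*Y*(C3*Y*Q)^2 + (C3*Y*Q)^3)"
    by algebra
  then show ?thesis using assms by simp
qed

lemma key3b:
  fixes C3 Y D0 D1 D2 M :: "'a::idom"
  assumes "M = D0*Y^3 + D1*Y^2 + D2*Y + C3"
  shows "C3*(C3^2*D0*Y^3 + C3*D1*Y^2*(C3 - M) + D2*Y*(C3 - M)^2 + (C3 - M)^3)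
     = M * (C3*(C3^2 - C3*D1*Y^2 - D2*Y*(2*C3 - M) - 3*C3^2 + 3*C3*M - M^2))"
  unfolding assms by algebra

lemma red:
  fixes c0 c1 c2 c3 k :: rat
  defines "d0 \<equiv> c0 + c1*k + c2*k^2 + c3*k^3"
      and "d1 \<equiv> c1 + 2*c2*k + 3*c3*k^2"
      and "d2 \<equiv> c2 + 3*c3*k"
  assumes c3: "c3 \<noteq> 0" and d0: "d0 \<noteq> 0"
  shows "degree [: k - d2/c3, -d1/c3, -d0/c3 :] = 2"
    and "\<not> irreducible (pcompose [:c0,c1,c2,c3:] [: k - d2/c3, -d1/c3, -d0/c3 :])"
proof -
  show "degree [: k - d2/c3, -d1/c3, -d0/c3 :] = 2" using c3 d0 by simp
  define G where "G = [: k - d2/c3, -d1/c3, -d0/c3 :]"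
  define Q where "Q = [: - d2/c3, -d1/c3, -d0/c3 :]"
  define Y where "Y = [:0,1::rat:]"
  define M where "M = [:c3,d2,d1,d0:]"
  have GKQ: "G = [:k:] + Q" unfolding G_def Q_def by simp
  have fG: "pcompose [:c0,c1,c2,c3:] G = [:c0:] + [:c1:]*G + [:c2:]*G^2 + [:c3:]*G^3"
    by (simp add: pcompose_pCons algebra_simps power2_eq_square power3_eq_cube)
  have t: "pcompose [:c0,c1,c2,c3:] G = [:d0:] + [:d1:]*Q + [:d2:]*Q^2 + [:c3:]*Q^3"
  proof -
    have "pcompose [:c0,c1,c2,c3:] G = [:c0:] + [:c1:]*([:k:]+Q) + [:c2:]*([:k:]+Q)^2 + [:c3:]*([:k:]+Q)^3"
      using fG GKQ by simp
    also have "\<dots> = ([:c0:] + [:c1:]*[:k:] + [:c2:]*[:k:]^2 + [:c3:]*[:k:]^3) + ([:c1:] + 2*[:c2:]*[:k:] + 3*[:c3:]*[:k:]^2)*Q + ([:c2:] + 3*[:c3:]*[:k:])*Q^2 + [:c3:]*Q^3"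
      by (rule taylor3)
    also have "([:c0:] + [:c1:]*[:k:] + [:c2:]*[:k:]^2 + [:c3:]*[:k:]^3) = [:d0:]"
      by (simp add: d0_def power2_eq_square power3_eq_cube)
    also have "([:c1:] + 2*[:c2:]*[:k:] + 3*[:c3:]*[:k:]^2) = [:d1:]"
      by (simp add: d1_def power2_eq_square numeral_poly)
    also have "([:c2:] + 3*[:c3:]*[:k:]) = [:d2:]"
      by (simp add: d2_def numeral_poly)
    finally show ?thesis .
  qed
  have hQ: "[:c3:]*Y*Q = [:c3:] - M"
    using c3 by (simp add: Y_def Q_def M_def)
  have hM: "M = [:d0:]*Y^3 + [:d1:]*Y^2 + [:d2:]*Y + [:c3:]"
    by (simp add: Y_def M_def power2_eq_square power3_eq_cube)
  have "M dvd [:c3:]^3*Y^3*pcompose [:c0,c1,c2,c3:] G"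
    unfolding t key3[OF hQ] key3b[OF hM] by (rule dvd_triv_left)
  then have "M dvd [:c3:]^3*(Y^3*pcompose [:c0,c1,c2,c3:] G)"
    by (simp add: mult.assoc)
  moreover have "is_unit ([:c3:]^3)" using c3 by (simp add: is_unit_power_iff is_unit_const_poly_iff dvd_field_iff)
  ultimately have "M dvd Y^3*pcompose [:c0,c1,c2,c3:] G"
    by (metis dvd_mult_unit_iff')
  moreover have "coprime M (Y^3)"
  proof -
    have "prime_elem Y" unfolding Y_def by (rule prime_elem_linear_field_poly) simp
    moreover have "\<not> Y dvd M"
    proof
      assume "Y dvd M"
      then have "poly M 0 = 0" unfolding Y_def using dvd_iff_poly_eq_0[of 0 M] by simp
      then show False using c3 by (simp add: M_def)
    qed
    ultimately show ?thesis by (rule prime_elem_imp_power_coprime)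
  qed
  ultimately have dv: "M dvd pcompose [:c0,c1,c2,c3:] G"
    by (metis coprime_dvd_mult_right_iff)
  then obtain H where H: "pcompose [:c0,c1,c2,c3:] G = M * H" by blast
  have dG: "degree G = 2" unfolding G_def using c3 d0 by simp
  have dF: "degree (pcompose [:c0,c1,c2,c3:] G) = 6"
    using c3 dG by (simp add: degree_pcompose)
  have dM: "degree M = 3" using d0 by (simp add: M_def)
  have "H \<noteq> 0" using H dF by (metis degree_0 mult_zero_right zero_neq_numeral)
  moreover have "M \<noteq> 0" using dM by (metis degree_0 zero_neq_numeral)
  ultimately have dH: "degree H = 3" using H dF dM degree_mult_eq[of M H] by simp
  show "\<not> irreducible (pcompose [:c0,c1,c2,c3:] [: k - d2/c3, -d1/c3, -d0/c3 :])"
  proof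
    assume "irreducible (pcompose [:c0,c1,c2,c3:] [: k - d2/c3, -d1/c3, -d0/c3 :])"
    then have "is_unit M \<or> is_unit H" using H unfolding G_def by (metis irreducibleD)
    then show False using dM dH `M \<noteq> 0` `H \<noteq> 0` by (simp add: is_unit_iff_degree)
  qed
qed

definition vinv :: "rat poly \<Rightarrow> rat" where
  "vinv g = coeff g 0 - (coeff g 1)^2 / (4 * coeff g 2)"

lemma vinv_comp:
  fixes g p :: "rat poly"
  assumes "degree g = 2" "degree (pcompose g p) = 2"
  shows "vinv (pcompose g p) = vinv g"
proof -
  have "degree p = 1" using assms by (simp add: degree_pcompose)
  then have p: "p = [:coeff p 0, coeff p 1:]"
    by (intro poly_eqI) (auto simp: coeff_pCons coeff_eq_0 split: nat.split)
  have a: "coeff p 1 \<noteq> 0" using \<open>degree p = 1\<close>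
    by (metis coeff_0 degree_0 p one_neq_zero degree_pCons_eq_if pCons_eq_0_iff)
  have g: "g = [:coeff g 0, coeff g 1, coeff g 2:]"
    using assms(1) by (intro poly_eqI) (auto simp: coeff_pCons coeff_eq_0 numeral_2_eq_2 split: nat.split)
  have c2: "coeff g 2 \<noteq> 0" using assms(1)
    by (metis leading_coeff_0_iff degree_0 zero_neq_numeral)
  define a b c0 c1 c2 where "a = coeff p 1" "b = coeff p 0" "c0 = coeff g 0" "c1 = coeff g 1" "c2 = coeff g 2"
  have "vinv (pcompose [:c0,c1,c2:] [:b,a:]) = vinv [:c0,c1,c2:]"
    using a c2 unfolding a_b_c0_c1_c2_def[symmetric]
    by (simp add: vinv_def pcompose_pCons numeral_2_eq_2 field_simps power2_eq_square)
  then show ?thesis using p g unfolding a_b_c0_c1_c2_def by metis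
qed

lemma cubic_form:
  fixes f :: "rat poly"
  assumes "degree f = 3"
  shows "f = [:coeff f 0, coeff f 1, coeff f 2, coeff f 3:]"
  using assms by (intro poly_eqI) (auto simp: coeff_pCons coeff_eq_0 numeral_2_eq_2 numeral_3_eq_3 split: nat.split)

lemma no_root:
  fixes f :: "rat poly"
  assumes "irreducible f" "degree f = 3"
  shows "poly f k \<noteq> 0"
proof
  assume "poly f k = 0"
  then have "[:-k,1:] dvd f" using dvd_iff_poly_eq_0[of "-k" f] by simp
  then obtain r where r: "f = [:-k,1:] * r" by blast
  have "r \<noteq> 0" using r assms(2) by auto
  then have "degree r = 2" using r assms(2) degree_mult_eq[of "[:-k,1:]" r] by simp
  have "is_unit [:-k,1:] \<or> is_unit r" using assms(1) r by (metis irreducibleD)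
  then show False using \<open>r \<noteq> 0\<close> \<open>degree r = 2\<close> by (simp add: is_unit_iff_degree)
qed

lemma fiber_finite:
  fixes c0 c1 c2 c3 c :: rat
  assumes c3: "c3 \<noteq> 0" and nr: "\<And>k. c0 + c1*k + c2*k^2 + c3*k^3 \<noteq> 0"
  shows "finite {k. (k - (c2 + 3*c3*k)/c3) - (-(c1 + 2*c2*k + 3*c3*k^2)/c3)^2/(4*(-(c0 + c1*k + c2*k^2 + c3*k^3)/c3)) = c}"
proof -
  define P where "P = smult (4*c3) ([:c0,c1,c2,c3:] * [:-c,1:]) - smult 4 ([:c0,c1,c2,c3:] * [:c2,3*c3:]) + [:c1,2*c2,3*c3:]^2"
  have P4: "coeff P 4 = c3^2"
    by (simp add: P_def power2_eq_square numeral_eq_Suc)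
  then have "P \<noteq> 0" using c3 by auto
  have "{k. (k - (c2 + 3*c3*k)/c3) - (-(c1 + 2*c2*k + 3*c3*k^2)/c3)^2/(4*(-(c0 + c1*k + c2*k^2 + c3*k^3)/c3)) = c} \<subseteq> {k. poly P k = 0}"
  proof -
    have "poly P k = 0" if h: "(k - (c2 + 3*c3*k)/c3) - (-(c1 + 2*c2*k + 3*c3*k^2)/c3)^2/(4*(-(c0 + c1*k + c2*k^2 + c3*k^3)/c3)) = c" for k
    proof -
    define d0 where "d0 = c0 + c1*k + c2*k^2 + c3*k^3"
    define d1 where "d1 = c1 + 2*c2*k + 3*c3*k^2"
    define d2 where "d2 = c2 + 3*c3*k"
    have d0: "d0 \<noteq> 0" using nr unfolding d0_def by blast
    have h': "(k - d2/c3) - (-d1/c3)^2/(4*(-d0/c3)) = c" using h unfolding d0_def d1_def d2_def .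
    have "4*c3*d0*(k - c) - 4*d0*d2 + d1^2 = 0"
      using h' c3 d0 by (simp add: field_simps power2_eq_square)
    moreover have "poly P k = 4*c3*d0*(k - c) - 4*d0*d2 + d1^2"
      by (simp add: P_def d0_def d1_def d2_def algebra_simps power2_eq_square power3_eq_cube)
    ultimately show "poly P k = 0" by simp
    qed
    then show ?thesis by blast
  qed
  moreover have "finite {k. poly P k = 0}" using \<open>P \<noteq> 0\<close> by (rule poly_roots_finite)
  ultimately show ?thesis by (rule finite_subset)
qed

theorem theorem3p2:
  fixes f :: "rat poly"
  assumes "irreducible f" and "degree f = 3"
  shows "\<exists>S :: rat poly set. infinite S \<and>
           (\<forall>g\<in>S. degree g = 2 \<and> \<not> irreducible (pcompose f g)) \<and>
           (\<forall>g1\<in>S. \<forall>g2\<in>S. g1 \<noteq> g2 \<longrightarrow> \<not> (\<exists>p :: rat poly. g1 = pcompose g2 p))"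
proof -
  define c0 c1 c2 c3 where "c0 = coeff f 0" "c1 = coeff f 1" "c2 = coeff f 2" "c3 = coeff f 3"
  have fc: "f = [:c0,c1,c2,c3:]" unfolding c0_c1_c2_c3_def by (rule cubic_form[OF assms(2)])
  have c3: "c3 \<noteq> 0" using assms(2) unfolding c0_c1_c2_c3_def
    by (metis leading_coeff_0_iff degree_0 zero_neq_numeral)
  have nr: "\<And>k. c0 + c1*k + c2*k^2 + c3*k^3 \<noteq> 0"
  proof -
    fix k
    have "poly f k \<noteq> 0" by (rule no_root[OF assms])
    then show "c0 + c1*k + c2*k^2 + c3*k^3 \<noteq> 0"
      unfolding fc by (simp add: algebra_simps power2_eq_square power3_eq_cube)
  qed
  define gk where "gk = (\<lambda>k. [: k - (c2 + 3*c3*k)/c3, -(c1 + 2*c2*k + 3*c3*k^2)/c3, -(c0 + c1*k + c2*k^2 + c3*k^3)/c3 :])"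
  have gk_deg: "degree (gk k) = 2" for k
    unfolding gk_def using red(1)[OF c3 nr] .
  have gk_red: "\<not> irreducible (pcompose f (gk k))" for k
    unfolding gk_def fc using red(2)[OF c3 nr] .
  define v where "v = (\<lambda>k. vinv (gk k))"
  have v_eq: "v k = (k - (c2 + 3*c3*k)/c3) - (-(c1 + 2*c2*k + 3*c3*k^2)/c3)^2/(4*(-(c0 + c1*k + c2*k^2 + c3*k^3)/c3))" for k
    by (simp add: v_def vinv_def gk_def numeral_2_eq_2)
  have fib: "finite {k. v k = c}" for c
    unfolding v_eq by (rule fiber_finite[OF c3 nr])
  have inf: "infinite (range v)"
  proof
    assume "finite (range v)"
    then have "finite (\<Union>c\<in>range v. {k. v k = c})" using fib by blast
    moreover have "(\<Union>c\<in>range v. {k. v k = c}) = (UNIV :: rat set)" by blast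
    ultimately have "finite (UNIV :: rat set)" by simp
    then show False using infinite_UNIV_char_0[where 'a=rat] by blast
  qed
  define h where "h = (\<lambda>c. gk (SOME k. v k = c))"
  have vh: "vinv (h c) = c" if "c \<in> range v" for c
  proof -
    have "\<exists>k. v k = c" using that by blast
    then have "v (SOME k. v k = c) = c" by (rule someI_ex)
    then show ?thesis unfolding h_def v_def .
  qed
  have hgk: "\<exists>k. h c = gk k" for c unfolding h_def by blast
  define S where "S = h ` range v"
  have "inj_on h (range v)"
    by (rule inj_onI) (metis vh)
  then have "infinite S" unfolding S_def using inf finite_imageD by blast
  moreover have "\<forall>g\<in>S. degree g = 2 \<and> \<not> irreducible (pcompose f g)"
  proof
    fix g assume "g \<in> S"
    then obtain c where "g = h c" unfolding S_def by blast
    then obtain k where "g = gk k" using hgk by blast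
    then show "degree g = 2 \<and> \<not> irreducible (pcompose f g)" using gk_deg gk_red by simp
  qed
  moreover have "\<forall>g1\<in>S. \<forall>g2\<in>S. g1 \<noteq> g2 \<longrightarrow> \<not> (\<exists>p :: rat poly. g1 = pcompose g2 p)"
  proof (intro ballI impI notI)
    fix g1 g2 assume g1: "g1 \<in> S" and g2: "g2 \<in> S" and ne: "g1 \<noteq> g2"
      and ex: "\<exists>p :: rat poly. g1 = pcompose g2 p"
    then obtain p where p: "g1 = pcompose g2 p" by blast
    obtain a1 where a1: "a1 \<in> range v" "g1 = h a1" using g1 S_def by blast
    obtain a2 where a2: "a2 \<in> range v" "g2 = h a2" using g2 S_def by blast
    have d1: "degree g1 = 2" using a1 hgk gk_deg by metis
    have d2: "degree g2 = 2" using a2 hgk gk_deg by metis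
    have "vinv g1 = vinv g2" using vinv_comp[OF d2] d1 p by simp
    then have "a1 = a2" using vh a1 a2 by metis
    then show False using ne a1 a2 by simp
  qed
  ultimately show ?thesis by blast
qed

end
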